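(* Let $N$ be a Poisson process on $[0,\infty)$ with intensity $\lambda>0$, with points $0<X_1<X_2<\cdots$, and let $\epsilon>0$. For every $i\ge1$ and every $s\ge 0$, $$\mathbb{E}\left[e^{-sB_i}\right]=\frac{\lambda+s}{\lambda+s\,e^{(\lambda+s)\epsilon}}.$$
   Context: A cluster is a maximal set of consecutive points $X_j,\dots,X_k$ with $X_{l+1}-X_l\le\epsilon$ for $j\le l<k$. Clusters are numbered from left to right; $A_i$ denotes the first point of the $i$-th cluster and $E_i=X_k+\epsilon$, where $X_k$ is the last point of the $i$-th cluster. The length of the $i$-th cluster is $B_i=E_i-A_i$. *)

theory Defs
  imports "HOL-Probability.Probability" "HOL-Library.Infinite_Set"
begin

text \<open>Points of the process are X 0 < X 1 < ... (X 0 is the paper's X_1).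
  Index j starts a cluster iff j = 0 or the gap X j - X (j-1) exceeds eps.\<close>

definition cluster_starts :: "(nat \<Rightarrow> real) \<Rightarrow> real \<Rightarrow> nat set" where
  "cluster_starts X eps = {j. j = 0 \<or> X j - X (j - 1) > eps}"

definition cluster_A :: "(nat \<Rightarrow> real) \<Rightarrow> real \<Rightarrow> nat \<Rightarrow> real" where
  "cluster_A X eps i = X (enumerate (cluster_starts X eps) (i - 1))"

text \<open>E_i = (last point of the i-th cluster) + eps; the last point is the one
  just before the first point of cluster i+1.\<close>
definition cluster_E :: "(nat \<Rightarrow> real) \<Rightarrow> real \<Rightarrow> nat \<Rightarrow> real" where
  "cluster_E X eps i = X (enumerate (cluster_starts X eps) i - 1) + eps"

definition cluster_length :: "(nat \<Rightarrow> real) \<Rightarrow> real \<Rightarrow> nat \<Rightarrow> real" where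
  "cluster_length X eps i = cluster_E X eps i - cluster_A X eps i"

text \<open>Poisson process on [0,\<infinity>) with intensity l: points are partial sums of
  i.i.d. Exp(l) interarrival times T 0, T 1, ...\<close>
definition poisson_points :: "(nat \<Rightarrow> 'a \<Rightarrow> real) \<Rightarrow> 'a \<Rightarrow> nat \<Rightarrow> real" where
  "poisson_points T \<omega> n = (\<Sum>k\<le>n. T k \<omega>)"

end

theory Submission imports Defs begin

lemma enum_char:
  fixes S :: "nat set"
  shows "a \<in> S \<Longrightarrow> card (S \<inter> {..<a}) = n \<Longrightarrow> enumerate S n = a"
proof (induction n arbitrary: S a)
  case 0
  have "S \<inter> {..<a} = {}" using 0 by simp
  then have lb: "\<And>y. y \<in> S \<Longrightarrow> a \<le> y" by (metis disjoint_iff lessThan_iff not_le)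
  show ?case unfolding enumerate_0
    by (rule Least_equality) (use 0 lb in auto)
next
  case (Suc n)
  define L where "L = (LEAST x. x \<in> S)"
  have LS: "L \<in> S" unfolding L_def using Suc.prems(1) by (rule LeastI)
  have La: "L \<le> a" unfolding L_def using Suc.prems(1) by (rule Least_le)
  have "L \<noteq> a"
  proof
    assume "L = a"
    have "S \<inter> {..<a} \<noteq> {}" using Suc.prems(2) by (metis card.empty nat.distinct(1))
    then obtain y where y: "y \<in> S" "y < a" by blast
    then have "y < L" using \<open>L = a\<close> by simp
    then have "y \<notin> S" unfolding L_def by (rule not_less_Least)
    then show False using y by simp
  qed
  then have "L < a" using La by simp
  have eq: "(S - {L}) \<inter> {..<a} = (S \<inter> {..<a}) - {L}" by blast
  have "L \<in> S \<inter> {..<a}" using LS \<open>L < a\<close> by simp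
  then have c1: "card ((S - {L}) \<inter> {..<a}) = n"
    unfolding eq using Suc.prems(2) by (simp add: card_Diff_singleton)
  have a1: "a \<in> S - {L}" using Suc.prems(1) \<open>L \<noteq> a\<close> by simp
  have IH: "enumerate (S - {L}) n = a" by (rule Suc.IH[OF a1 c1])
  have "enumerate S (Suc n) = enumerate (S - {enumerate S 0}) n" by (rule enumerate_Suc')
  also have "enumerate S 0 = L" unfolding enumerate_0 L_def by (rule refl)
  finally show ?case using IH by simp
qed

lemma pred_card_lessThan:
  assumes "\<And>j. Measurable.pred N (P j)"
  shows "Measurable.pred N (\<lambda>x. card {j\<in>{..<(a::nat)}. P j x} = n)"
  using assms
proof (induction a arbitrary: n)
  case 0
  then show ?case by simp
next
  case (Suc a)
  have eq: "\<And>x. card {j\<in>{..<Suc a}. P j x} = card {j\<in>{..<a}. P j x} + (if P a x then 1 else 0)"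
  proof -
    fix x
    have "{j\<in>{..<Suc a}. P j x} = (if P a x then insert a {j\<in>{..<a}. P j x} else {j\<in>{..<a}. P j x})"
      by (auto simp: less_Suc_eq)
    then show "?thesis x" by auto
  qed
  have "(\<lambda>x. card {j\<in>{..<Suc a}. P j x} = n) = (\<lambda>x. (P a x \<and> n \<ge> 1 \<and> card {j\<in>{..<a}. P j x} = n - 1) \<or> (\<not> P a x \<and> card {j\<in>{..<a}. P j x} = n))"
    unfolding eq by (auto simp: fun_eq_iff)
  then show ?case using Suc by simp
qed

lemma measurable_enumerate:
  fixes Q :: "nat \<Rightarrow> 'a \<Rightarrow> bool"
  assumes "\<And>k. Measurable.pred M (Q k)"
  shows "(\<lambda>\<omega>. enumerate {k. Q k \<omega>} n) \<in> measurable M (count_space UNIV)"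
  using assms
proof (induction n arbitrary: Q)
  case 0
  note [measurable] = 0
  show ?case unfolding enumerate_0 mem_Collect_eq by (rule measurable_Least[where P=Q]) (use 0 in simp)
next
  case (Suc n)
  note [measurable] = Suc.prems
  define L where "L = (\<lambda>\<omega>. LEAST k. Q k \<omega>)"
  have Lm[measurable]: "L \<in> measurable M (count_space UNIV)" unfolding L_def by (rule measurable_Least[where P=Q]) (use Suc.prems in simp)
  have "(\<lambda>\<omega>. enumerate {k. Q k \<omega> \<and> k \<noteq> L \<omega>} n) \<in> measurable M (count_space UNIV)"
    using Suc.prems by (intro Suc.IH) measurable
  moreover have "\<And>\<omega>. {k. Q k \<omega>} - {enumerate {k. Q k \<omega>} 0} = {k. Q k \<omega> \<and> k \<noteq> L \<omega>}"
    by (auto simp: enumerate_0 L_def)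
  ultimately show ?case by (simp add: enumerate_Suc')
qed

definition stS :: "(nat \<Rightarrow> 'a \<Rightarrow> real) \<Rightarrow> real \<Rightarrow> 'a \<Rightarrow> nat set" where
  "stS T eps \<omega> = {j. j = 0 \<or> eps < T j \<omega>}"

lemma pp_diff: "poisson_points T \<omega> (Suc k) - poisson_points T \<omega> k = T (Suc k) \<omega>"
  by (simp add: poisson_points_def)

lemma starts_eq: "cluster_starts (poisson_points T \<omega>) eps = stS T eps \<omega>"
  unfolding cluster_starts_def stS_def
proof (intro Collect_cong)
  fix j show "(j = 0 \<or> eps < poisson_points T \<omega> j - poisson_points T \<omega> (j - 1)) = (j = 0 \<or> eps < T j \<omega>)"
    by (cases j) (auto simp: pp_diff)
qed

definition Ev :: "(nat \<Rightarrow> 'a \<Rightarrow> real) \<Rightarrow> real \<Rightarrow> nat \<Rightarrow> nat \<Rightarrow> 'a \<Rightarrow> bool" where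
  "Ev T eps n a \<omega> \<longleftrightarrow> a \<in> stS T eps \<omega> \<and> card (stS T eps \<omega> \<inter> {..<a}) = n"

definition Cond :: "(nat \<Rightarrow> 'a \<Rightarrow> real) \<Rightarrow> real \<Rightarrow> nat \<Rightarrow> nat \<Rightarrow> nat \<Rightarrow> 'a \<Rightarrow> bool" where
  "Cond T eps n a m \<omega> \<longleftrightarrow> Ev T eps n a \<omega> \<and> (\<forall>k\<in>{a<..a+m}. T k \<omega> \<le> eps) \<and> eps < T (Suc (a+m)) \<omega>"

lemma Ev0: "Ev T eps 0 0 \<omega>"
  by (simp add: Ev_def stS_def)

lemma Cond_next:
  assumes "Cond T eps n a m \<omega>"
  shows "Ev T eps (Suc n) (Suc (a+m)) \<omega>"
proof -
  have e: "Ev T eps n a \<omega>" and le: "\<forall>k\<in>{a<..a+m}. T k \<omega> \<le> eps" and gt: "eps < T (Suc (a+m)) \<omega>"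
    using assms by (auto simp: Cond_def)
  have notin: "k \<notin> stS T eps \<omega>" if k: "k \<in> {a<..a+m}" for k
  proof -
    have "k \<noteq> 0" "T k \<omega> \<le> eps" using k le by auto
    then show ?thesis unfolding stS_def by simp
  qed
  have aS: "a \<in> stS T eps \<omega>" using e by (simp add: Ev_def)
  have "stS T eps \<omega> \<inter> {..<Suc (a+m)} = insert a (stS T eps \<omega> \<inter> {..<a})"
  proof (rule set_eqI)
    fix k
    show "k \<in> stS T eps \<omega> \<inter> {..<Suc (a+m)} \<longleftrightarrow> k \<in> insert a (stS T eps \<omega> \<inter> {..<a})"
      using notin[of k] aS by (cases "k < a"; cases "k = a") auto
  qed
  then have "card (stS T eps \<omega> \<inter> {..<Suc (a+m)}) = Suc n"
    using e by (simp add: Ev_def)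
  moreover have "Suc (a+m) \<in> stS T eps \<omega>" using gt by (simp add: stS_def)
  ultimately show ?thesis by (simp add: Ev_def)
qed

lemma Ev_enum: assumes "Ev T eps n a \<omega>" shows "enumerate (stS T eps \<omega>) n = a"
  using assms unfolding Ev_def by (intro enum_char) auto

lemma Ev_unique: "Ev T eps n a \<omega> \<Longrightarrow> Ev T eps n b \<omega> \<Longrightarrow> a = b"
  using Ev_enum[of T eps n a \<omega>] Ev_enum[of T eps n b \<omega>] by simp

lemma Ev_prev:
  assumes "Ev T eps (Suc n) b \<omega>"
  shows "\<exists>a m. Cond T eps n a m \<omega> \<and> b = Suc (a+m)"
proof -
  let ?S = "stS T eps \<omega>"
  have bS: "b \<in> ?S" and c: "card (?S \<inter> {..<b}) = Suc n" using assms by (auto simp: Ev_def)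
  have fin: "finite (?S \<inter> {..<b})" by simp
  have ne: "?S \<inter> {..<b} \<noteq> {}" using c by auto
  define a where "a = Max (?S \<inter> {..<b})"
  have aS: "a \<in> ?S \<inter> {..<b}" unfolding a_def using fin ne by (rule Max_in)
  have amax: "\<And>k. k \<in> ?S \<inter> {..<b} \<Longrightarrow> k \<le> a" unfolding a_def using fin by simp
  have split: "?S \<inter> {..<b} = insert a (?S \<inter> {..<a})"
    using aS amax by (auto simp: le_less)
  have "card (?S \<inter> {..<a}) = n" using c unfolding split by simp
  then have Ea: "Ev T eps n a \<omega>" using aS by (simp add: Ev_def)
  define m where "m = b - Suc a"
  have bm: "b = Suc (a + m)" using aS by (simp add: m_def)
  have "\<forall>k\<in>{a<..a+m}. T k \<omega> \<le> eps"
  proof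
    fix k assume k: "k \<in> {a<..a+m}"
    then have "k \<notin> ?S" using amax[of k] bm by auto
    moreover have "k \<noteq> 0" using k by auto
    ultimately show "T k \<omega> \<le> eps" by (auto simp: stS_def)
  qed
  moreover have "eps < T (Suc (a+m)) \<omega>" using bS bm by (simp add: stS_def)
  ultimately show ?thesis using Ea bm by (auto simp: Cond_def)
qed

lemma Cond_length:
  assumes "Cond T eps n a m \<omega>"
  shows "cluster_length (poisson_points T \<omega>) eps (Suc n) = eps + (\<Sum>k\<in>{a<..a+m}. T k \<omega>)"
proof -
  have e1: "enumerate (stS T eps \<omega>) n = a" using assms unfolding Cond_def by (intro Ev_enum) simp
  have e2: "enumerate (stS T eps \<omega>) (Suc n) = Suc (a+m)" using Cond_next[OF assms] by (rule Ev_enum)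
  have "poisson_points T \<omega> (a+m) = poisson_points T \<omega> a + (\<Sum>k\<in>{a<..a+m}. T k \<omega>)"
  proof -
    have "{..a+m} = {..a} \<union> {a<..a+m}" by auto
    then show ?thesis unfolding poisson_points_def by (simp only:) (rule sum.union_disjoint, auto)
  qed
  then show ?thesis
    by (simp add: cluster_length_def cluster_E_def cluster_A_def starts_eq e1 e2)
qed

definition Fv :: "(nat \<Rightarrow> 'a \<Rightarrow> real) \<Rightarrow> real \<Rightarrow> real \<Rightarrow> nat \<Rightarrow> nat \<Rightarrow> nat \<Rightarrow> 'a \<Rightarrow> real" where
  "Fv T eps s n a m \<omega> = (if Cond T eps n a m \<omega> then exp (- s * (eps + (\<Sum>k\<in>{a<..a+m}. T k \<omega>))) else 0)"

lemma suminf_single_ennreal: "(\<Sum>m. (if m = m0 then (x::ennreal) else 0)) = x"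
  using sums_single[of m0 "\<lambda>_. x"] by (simp add: sums_iff)

lemma pointwise_sum:
  "(\<Sum>a. \<Sum>m. ennreal (Fv T eps s n a m \<omega>)) =
    (if \<exists>b. Ev T eps (Suc n) b \<omega> then ennreal (exp (- s * cluster_length (poisson_points T \<omega>) eps (Suc n))) else 0)"
proof (cases "\<exists>b. Ev T eps (Suc n) b \<omega>")
  case True
  then obtain b where Eb: "Ev T eps (Suc n) b \<omega>" by blast
  obtain a0 m0 where C0: "Cond T eps n a0 m0 \<omega>" using Ev_prev[OF Eb] by blast
  have uniq: "a = a0 \<and> m = m0" if "Cond T eps n a m \<omega>" for a m
  proof -
    have "Suc (a+m) = Suc (a0+m0)" using Ev_unique[OF Cond_next[OF that] Cond_next[OF C0]] .
    moreover have "a = a0" using that C0 by (auto simp: Cond_def intro: Ev_unique)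
    ultimately show ?thesis by simp
  qed
  define v where "v = ennreal (exp (- s * cluster_length (poisson_points T \<omega>) eps (Suc n)))"
  have "ennreal (Fv T eps s n a m \<omega>) = (if m = m0 then (if a = a0 then v else 0) else 0)" for a m
  proof (cases "Cond T eps n a m \<omega>")
    case True
    then have "a = a0" "m = m0" using uniq by auto
    then show ?thesis using True unfolding Fv_def v_def Cond_length[OF True] by simp
  next
    case False
    then have "\<not> (a = a0 \<and> m = m0)" using C0 by blast
    then show ?thesis using False unfolding Fv_def by simp
  qed
  note eq = this
  have inner: "(\<Sum>m. ennreal (Fv T eps s n a m \<omega>)) = (if a = a0 then v else 0)" for a
  proof -
    have "(\<lambda>m. ennreal (Fv T eps s n a m \<omega>)) = (\<lambda>m. if m = m0 then (if a = a0 then v else 0) else 0)"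
      by (rule ext) (rule eq)
    then show ?thesis by (simp only: suminf_single_ennreal)
  qed
  have "(\<lambda>a. \<Sum>m. ennreal (Fv T eps s n a m \<omega>)) = (\<lambda>a. if a = a0 then v else 0)"
    by (rule ext) (rule inner)
  then have "(\<Sum>a. \<Sum>m. ennreal (Fv T eps s n a m \<omega>)) = v"
    by (simp only: suminf_single_ennreal)
  then show ?thesis using True unfolding v_def by (simp only: if_True)
next
  case False
  have z: "Fv T eps s n a m \<omega> = 0" for a m
    using False Cond_next[of T eps n a m \<omega>] unfolding Fv_def by auto
  have "(\<lambda>a. \<Sum>m. ennreal (Fv T eps s n a m \<omega>)) = (\<lambda>a. 0)"
    by (simp only: z ennreal_0 suminf_zero)
  then show ?thesis using False by (simp only: suminf_zero if_False)
qed

definition qf :: "real \<Rightarrow> real \<Rightarrow> real \<Rightarrow> real" where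
  "qf l eps s = l / (l + s) * (1 - exp (- ((l + s) * eps)))"

definition EvX :: "real \<Rightarrow> nat \<Rightarrow> nat \<Rightarrow> (nat \<Rightarrow> real) \<Rightarrow> bool" where
  "EvX eps n a x \<longleftrightarrow> (a = 0 \<or> eps < x a) \<and> card {j\<in>{..<a}. j = 0 \<or> (j \<le> a \<and> eps < x j)} = n"

lemma Ev_EvX: "Ev T eps n a \<omega> = EvX eps n a (restrict (\<lambda>i. T i \<omega>) {..a})"
proof -
  have "stS T eps \<omega> \<inter> {..<a} = {j\<in>{..<a}. j = 0 \<or> (j \<le> a \<and> eps < restrict (\<lambda>i. T i \<omega>) {..a} j)}"
    by (auto simp: stS_def)
  then show ?thesis by (simp add: Ev_def EvX_def stS_def)
qed

lemma pred_EvX: "Measurable.pred (PiM {..a} (\<lambda>_. borel)) (EvX eps n a)"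
proof -
  have P: "Measurable.pred (PiM {..a} (\<lambda>_. borel)) (\<lambda>x. j = 0 \<or> (j \<le> a \<and> eps < x j))" for j
    by (cases "j \<le> a") auto
  have A: "Measurable.pred (PiM {..a} (\<lambda>_. borel)) (\<lambda>x::nat\<Rightarrow>real. a = 0 \<or> eps < x a)"
    by auto
  have C[measurable]: "Measurable.pred (PiM {..a} (\<lambda>_. borel)) (\<lambda>x. card {j\<in>{..<a}. j = 0 \<or> (j \<le> a \<and> eps < x j)} = n)"
    by (rule pred_card_lessThan) (rule P)
  note A[measurable]
  show ?thesis unfolding EvX_def by measurable
qed

locale clus = prob_space M for M :: "'a measure" +
  fixes T :: "nat \<Rightarrow> 'a \<Rightarrow> real" and l eps :: real
  assumes l_pos: "0 < l" and eps_pos: "0 < eps"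
    and indep: "indep_vars (\<lambda>_. borel) T UNIV"
    and dist: "\<And>n. distributed M lborel (T n) (exponential_density l)"
begin

lemma T_meas[measurable]: "T n \<in> borel_measurable M"
  using distributed_measurable[OF dist[of n]] by simp

lemma pred_Ev[measurable]: "Measurable.pred M (Ev T eps n a)"
proof -
  have r: "(\<lambda>\<omega>. restrict (\<lambda>i. T i \<omega>) {..a}) \<in> measurable M (PiM {..a} (\<lambda>_. borel))"
    by (intro measurable_restrict) simp
  have "Measurable.pred M (\<lambda>\<omega>. EvX eps n a (restrict (\<lambda>i. T i \<omega>) {..a}))"
    using measurable_compose[OF r pred_EvX] by (simp add: comp_def)
  then show ?thesis by (simp add: Ev_EvX[abs_def])
qed

lemma sets_Ev[measurable]: "{\<omega>\<in>space M. Ev T eps n a \<omega>} \<in> sets M"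
  by measurable

lemma int_mid:
  assumes s: "0 \<le> s"
  shows "(\<integral>\<^sup>+\<omega>. ennreal (if T j \<omega> \<le> eps then exp (- s * T j \<omega>) else 0) \<partial>M) = ennreal (qf l eps s)"
proof -
  let ?g = "\<lambda>x. ennreal (if x \<le> eps then exp (- s * x) else 0)"
  have "(\<integral>\<^sup>+\<omega>. ?g (T j \<omega>) \<partial>M) = (\<integral>\<^sup>+x. ennreal (exponential_density l x) * ?g x \<partial>lborel)"
    by (rule distributed_nn_integral[OF dist, symmetric]) simp
  also have "\<dots> = (\<integral>\<^sup>+x. ennreal (l * exp (- ((l + s) * x))) * indicator {0..eps} x \<partial>lborel)"
  proof (rule nn_integral_cong)
    fix x :: real
    have "exp (- x * l) * exp (- s * x) = exp (- ((l + s) * x))"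
      by (simp add: exp_add[symmetric] algebra_simps)
    then show "ennreal (exponential_density l x) * ?g x = ennreal (l * exp (- ((l + s) * x))) * indicator {0..eps} x"
      using l_pos by (auto simp: exponential_density_def indicator_def ennreal_mult[symmetric] mult.assoc)
  qed
  also have "\<dots> = ennreal (qf l eps s)"
  proof (rule nn_integral_has_integral_lebesgue')
    show "\<And>x. x \<in> {0..eps} \<Longrightarrow> 0 \<le> l * exp (- ((l + s) * x))" using l_pos by simp
    define F where "F x = - l / (l + s) * exp (- ((l + s) * x))" for x
    have "((\<lambda>x. l * exp (- ((l + s) * x))) has_integral (F eps - F 0)) {0..eps}"
    proof (rule fundamental_theorem_of_calculus)
      show "0 \<le> eps" using eps_pos by simp
      fix x :: real
      have "(F has_real_derivative (- l / (l + s) * (exp (- ((l + s) * x)) * (- (l + s))))) (at x within {0..eps})"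
        unfolding F_def by (intro derivative_eq_intros) auto
      moreover have "- l / (l + s) * (exp (- ((l + s) * x)) * (- (l + s))) = l * exp (- ((l + s) * x))"
        using l_pos s by (simp add: field_simps)
      ultimately show "(F has_vector_derivative l * exp (- ((l + s) * x))) (at x within {0..eps})"
        by (simp add: has_real_derivative_iff_has_vector_derivative)
    qed
    moreover have "F eps - F 0 = l / (l + s) - l / (l + s) * exp (- ((l + s) * eps))"
      by (simp add: F_def)
    moreover have "qf l eps s = l / (l + s) - l / (l + s) * exp (- ((l + s) * eps))"
      by (simp add: qf_def right_diff_distrib)
    ultimately show "((\<lambda>x. l * exp (- ((l + s) * x))) has_integral qf l eps s) {0..eps}" by simp
  qed
  finally show ?thesis .
qed

lemma int_last:
  "(\<integral>\<^sup>+\<omega>. ennreal (if eps < T j \<omega> then C else 0) \<partial>M) = ennreal (max 0 C) * ennreal (exp (- eps * l))"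
proof -
  have "(\<integral>\<^sup>+\<omega>. ennreal (if eps < T j \<omega> then C else 0) \<partial>M) = (\<integral>\<^sup>+\<omega>. ennreal (max 0 C) * indicator {\<omega>\<in>space M. eps < T j \<omega>} \<omega> \<partial>M)"
    by (rule nn_integral_cong) (auto simp: indicator_def ennreal_max_0)
  also have "\<dots> = ennreal (max 0 C) * emeasure M {\<omega>\<in>space M. eps < T j \<omega>}"
    by (rule nn_integral_cmult_indicator) measurable
  also have "emeasure M {\<omega>\<in>space M. eps < T j \<omega>} = ennreal (exp (- eps * l))"
    using exponential_distributedD_gt[OF dist _ l_pos, of eps j] eps_pos by (simp add: emeasure_eq_measure)
  finally show ?thesis .
qed

end

definition Kf :: "nat \<Rightarrow> nat \<Rightarrow> nat set" where
  "Kf a j = (if j = a then {..a} else {j})"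

definition Yf :: "real \<Rightarrow> real \<Rightarrow> nat \<Rightarrow> nat \<Rightarrow> nat \<Rightarrow> nat \<Rightarrow> (nat \<Rightarrow> real) \<Rightarrow> real" where
  "Yf eps s n a m j x = (if j = a then (if EvX eps n a x then 1 else 0)
     else if j = Suc (a+m) then (if eps < x j then exp (- s * eps) else 0)
     else (if x j \<le> eps then exp (- s * x j) else 0))"

lemma prod_if_zero:
  assumes "finite A"
  shows "(\<Prod>j\<in>A. if P j then f j else (0::real)) = (if \<forall>j\<in>A. P j then \<Prod>j\<in>A. f j else 0)"
  using assms by (induction A rule: finite_induct) auto

lemma Yf_nonneg: "0 \<le> Yf eps s n a m j x"
  by (simp add: Yf_def)

lemma Yf_meas: "Yf eps s n a m j \<in> borel_measurable (PiM (Kf a j) (\<lambda>_. borel))"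
proof (cases "j = a")
  case True
  have [measurable]: "Measurable.pred (PiM {..a} (\<lambda>_. borel)) (EvX eps n a)" by (rule pred_EvX)
  have K: "Kf a j = {..a}" using True by (simp add: Kf_def)
  have Y: "Yf eps s n a m j = (\<lambda>x. if EvX eps n a x then 1 else 0)" using True by (simp add: Yf_def fun_eq_iff)
  show ?thesis unfolding K Y by measurable
next
  case False
  have [measurable]: "(\<lambda>x. x j) \<in> borel_measurable (PiM {j} (\<lambda>_. borel))"
    by (rule measurable_component_singleton) simp
  have K: "Kf a j = {j}" using False by (simp add: Kf_def)
  have Y: "Yf eps s n a m j = (\<lambda>x. if j = Suc (a+m) then (if eps < x j then exp (- s * eps) else 0)
     else (if x j \<le> eps then exp (- s * x j) else 0))" using False by (simp add: Yf_def fun_eq_iff)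
  show ?thesis unfolding K Y by measurable
qed

lemma Fv_prod:
  "Fv T eps s n a m \<omega> = (\<Prod>j\<in>{a..Suc (a+m)}. Yf eps s n a m j (restrict (\<lambda>i. T i \<omega>) (Kf a j)))"
proof -
  let ?Z = "\<lambda>j. Yf eps s n a m j (restrict (\<lambda>i. T i \<omega>) (Kf a j))"
  have Za: "?Z a = (if Ev T eps n a \<omega> then 1 else 0)"
    by (simp add: Yf_def Kf_def Ev_EvX)
  have Zl: "?Z (Suc (a+m)) = (if eps < T (Suc (a+m)) \<omega> then exp (- s * eps) else 0)"
    by (simp add: Yf_def Kf_def)
  have Zm: "?Z j = (if T j \<omega> \<le> eps then exp (- s * T j \<omega>) else 0)" if "j \<in> {a<..a+m}" for j
    using that by (simp add: Yf_def Kf_def)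
  have I: "{a..Suc (a+m)} = insert a (insert (Suc (a+m)) {a<..a+m})" by auto
  have "(\<Prod>j\<in>{a..Suc (a+m)}. ?Z j) = ?Z a * (?Z (Suc (a+m)) * (\<Prod>j\<in>{a<..a+m}. ?Z j))"
    unfolding I by (simp add: prod.insert)
  also have "(\<Prod>j\<in>{a<..a+m}. ?Z j) = (\<Prod>j\<in>{a<..a+m}. if T j \<omega> \<le> eps then exp (- s * T j \<omega>) else 0)"
    by (rule prod.cong) (simp_all add: Zm)
  also have "\<dots> = (if \<forall>j\<in>{a<..a+m}. T j \<omega> \<le> eps then \<Prod>j\<in>{a<..a+m}. exp (- s * T j \<omega>) else 0)"
    by (rule prod_if_zero) simp
  also have "(\<Prod>j\<in>{a<..a+m}. exp (- s * T j \<omega>)) = exp (- s * (\<Sum>j\<in>{a<..a+m}. T j \<omega>))"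
    by (simp add: exp_sum sum_distrib_left)
  finally have "(\<Prod>j\<in>{a..Suc (a+m)}. ?Z j) = ?Z a * (?Z (Suc (a+m)) *
      (if \<forall>j\<in>{a<..a+m}. T j \<omega> \<le> eps then exp (- s * (\<Sum>j\<in>{a<..a+m}. T j \<omega>)) else 0))" .
  moreover have "exp (- s * (eps + (\<Sum>k\<in>{a<..a+m}. T k \<omega>))) = exp (- s * eps) * exp (- s * (\<Sum>j\<in>{a<..a+m}. T j \<omega>))"
    by (simp add: exp_add[symmetric] distrib_left)
  ultimately show ?thesis unfolding Za Zl Fv_def Cond_def by auto
qed

context clus
begin

lemma indep_Y:
  "indep_vars (\<lambda>_. borel) (\<lambda>j \<omega>. Yf eps s n a m j (restrict (\<lambda>i. T i \<omega>) (Kf a j))) {a..Suc (a+m)}"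
proof -
  have "indep_vars (\<lambda>j. PiM (Kf a j) (\<lambda>_. borel)) (\<lambda>j \<omega>. restrict (\<lambda>i. T i \<omega>) (Kf a j)) {a..Suc (a+m)}"
  proof (rule indep_vars_restrict[OF indep])
    show "disjoint_family_on (Kf a) {a..Suc (a + m)}"
      unfolding disjoint_family_on_def Kf_def by auto
  qed simp
  then show ?thesis
    by (rule indep_vars_compose2) (rule Yf_meas)
qed

lemma indep_Y':
  "indep_vars (\<lambda>_. borel) (\<lambda>j \<omega>. ennreal (Yf eps s n a m j (restrict (\<lambda>i. T i \<omega>) (Kf a j)))) {a..Suc (a+m)}"
  using indep_vars_compose2[OF indep_Y, where Y="\<lambda>_ x. ennreal x" and N="\<lambda>_. borel"] by simp

lemma int_Fv:
  assumes s: "0 \<le> s"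
  shows "(\<integral>\<^sup>+\<omega>. ennreal (Fv T eps s n a m \<omega>) \<partial>M) =
    emeasure M {\<omega>\<in>space M. Ev T eps n a \<omega>} * (ennreal (qf l eps s) ^ m * ennreal (exp (- s * eps) * exp (- eps * l)))"
proof -
  let ?Z = "\<lambda>j \<omega>. Yf eps s n a m j (restrict (\<lambda>i. T i \<omega>) (Kf a j))"
  have "(\<integral>\<^sup>+\<omega>. ennreal (Fv T eps s n a m \<omega>) \<partial>M) = (\<integral>\<^sup>+\<omega>. ennreal (\<Prod>j\<in>{a..Suc (a+m)}. ?Z j \<omega>) \<partial>M)"
    by (simp add: Fv_prod)
  also have "\<dots> = (\<Prod>j\<in>{a..Suc (a+m)}. \<integral>\<^sup>+\<omega>. ennreal (?Z j \<omega>) \<partial>M)"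
  proof -
    have e: "(\<Prod>j\<in>{a..Suc (a+m)}. ennreal (?Z j \<omega>)) = ennreal (\<Prod>j\<in>{a..Suc (a+m)}. ?Z j \<omega>)" for \<omega>
      by (rule prod_ennreal) (rule Yf_nonneg)
    have "(\<integral>\<^sup>+\<omega>. (\<Prod>j\<in>{a..Suc (a+m)}. ennreal (?Z j \<omega>)) \<partial>M) = (\<Prod>j\<in>{a..Suc (a+m)}. \<integral>\<^sup>+\<omega>. ennreal (?Z j \<omega>) \<partial>M)"
      by (rule indep_vars_nn_integral[OF _ indep_Y']) auto
    then show ?thesis by (simp only: e)
  qed
  also have "\<dots> = (\<integral>\<^sup>+\<omega>. ennreal (?Z a \<omega>) \<partial>M) * ((\<integral>\<^sup>+\<omega>. ennreal (?Z (Suc (a+m)) \<omega>) \<partial>M) *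
        (\<Prod>j\<in>{a<..a+m}. \<integral>\<^sup>+\<omega>. ennreal (?Z j \<omega>) \<partial>M))"
  proof -
    have I: "{a..Suc (a+m)} = insert a (insert (Suc (a+m)) {a<..a+m})" by auto
    show ?thesis unfolding I by (simp add: prod.insert)
  qed
  also have "(\<integral>\<^sup>+\<omega>. ennreal (?Z a \<omega>) \<partial>M) = emeasure M {\<omega>\<in>space M. Ev T eps n a \<omega>}"
  proof -
    have "(\<integral>\<^sup>+\<omega>. ennreal (?Z a \<omega>) \<partial>M) = (\<integral>\<^sup>+\<omega>. indicator {\<omega>\<in>space M. Ev T eps n a \<omega>} \<omega> \<partial>M)"
      by (rule nn_integral_cong) (simp add: Yf_def Kf_def Ev_EvX[symmetric] indicator_def)
    also have "\<dots> = emeasure M {\<omega>\<in>space M. Ev T eps n a \<omega>}"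
      by (rule nn_integral_indicator) (rule sets_Ev)
    finally show ?thesis .
  qed
  also have "(\<integral>\<^sup>+\<omega>. ennreal (?Z (Suc (a+m)) \<omega>) \<partial>M) = ennreal (exp (- s * eps) * exp (- eps * l))"
  proof -
    have "(\<integral>\<^sup>+\<omega>. ennreal (?Z (Suc (a+m)) \<omega>) \<partial>M) = (\<integral>\<^sup>+\<omega>. ennreal (if eps < T (Suc (a+m)) \<omega> then exp (- s * eps) else 0) \<partial>M)"
      by (rule nn_integral_cong) (simp add: Yf_def Kf_def)
    also have "\<dots> = ennreal (max 0 (exp (- s * eps))) * ennreal (exp (- eps * l))"
      by (rule int_last)
    finally show ?thesis by (simp add: ennreal_mult)
  qed
  also have "(\<Prod>j\<in>{a<..a+m}. \<integral>\<^sup>+\<omega>. ennreal (?Z j \<omega>) \<partial>M) = (\<Prod>j\<in>{a<..a+m}. ennreal (qf l eps s))"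
  proof (rule prod.cong)
    fix j assume j: "j \<in> {a<..a+m}"
    have "(\<integral>\<^sup>+\<omega>. ennreal (?Z j \<omega>) \<partial>M) = (\<integral>\<^sup>+\<omega>. ennreal (if T j \<omega> \<le> eps then exp (- s * T j \<omega>) else 0) \<partial>M)"
      using j by (intro nn_integral_cong) (simp add: Yf_def Kf_def)
    also have "\<dots> = ennreal (qf l eps s)" by (rule int_mid[OF s])
    finally show "(\<integral>\<^sup>+\<omega>. ennreal (?Z j \<omega>) \<partial>M) = ennreal (qf l eps s)" .
  qed simp
  also have "(\<Prod>j\<in>{a<..a+m}. ennreal (qf l eps s)) = ennreal (qf l eps s) ^ m"
    by simp
  finally show ?thesis by (simp add: mult.commute)
qed

lemma Fv_meas[measurable]: "(\<lambda>\<omega>. Fv T eps s n a m \<omega>) \<in> borel_measurable M"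
  unfolding Fv_def Cond_def by measurable

definition U :: "nat \<Rightarrow> 'a set" where
  "U n = {\<omega>\<in>space M. \<exists>a. Ev T eps n a \<omega>}"

lemma U_UN: "U n = (\<Union>a. {\<omega>\<in>space M. Ev T eps n a \<omega>})"
  unfolding U_def by auto

lemma U_sets[measurable]: "U n \<in> sets M"
  unfolding U_UN by (intro sets.countable_UN) (auto simp: image_subset_iff)

lemma sum_Ev: "(\<Sum>a. emeasure M {\<omega>\<in>space M. Ev T eps n a \<omega>}) = emeasure M (U n)"
  unfolding U_UN
proof (rule suminf_emeasure)
  show "range (\<lambda>a. {\<omega>\<in>space M. Ev T eps n a \<omega>}) \<subseteq> sets M" unfolding image_subset_iff using sets_Ev by simp
  show "disjoint_family (\<lambda>a. {\<omega>\<in>space M. Ev T eps n a \<omega>})"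
    unfolding disjoint_family_on_def
  proof (intro ballI impI)
    fix x y :: nat assume "x \<noteq> y"
    then show "{\<omega>\<in>space M. Ev T eps n x \<omega>} \<inter> {\<omega>\<in>space M. Ev T eps n y \<omega>} = {}"
      using Ev_unique[of T eps n x _ y] by blast
  qed
qed

lemma qf_bounds:
  assumes s: "0 \<le> s"
  shows "0 \<le> qf l eps s" "qf l eps s < 1"
proof -
  have e: "exp (- ((l + s) * eps)) < 1" "0 < exp (- ((l + s) * eps))"
    using l_pos eps_pos s by auto
  have f: "0 < l / (l + s)" "l / (l + s) \<le> 1" using l_pos s by auto
  show "0 \<le> qf l eps s" unfolding qf_def using e f by (intro mult_nonneg_nonneg) auto
  have "qf l eps s \<le> 1 - exp (- ((l + s) * eps))"
    unfolding qf_def using e f by (intro mult_left_le_one_le) auto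
  then show "qf l eps s < 1" using e by linarith
qed

definition R :: "real \<Rightarrow> real" where
  "R s = exp (- s * eps) * exp (- eps * l) / (1 - qf l eps s)"

lemma main_nn:
  assumes s: "0 \<le> s"
  shows "(\<integral>\<^sup>+\<omega>. (if \<exists>b. Ev T eps (Suc n) b \<omega> then ennreal (exp (- s * cluster_length (poisson_points T \<omega>) eps (Suc n))) else 0) \<partial>M)
     = emeasure M (U n) * ennreal (R s)"
proof -
  let ?q = "qf l eps s" and ?C = "exp (- s * eps) * exp (- eps * l)"
  have q: "0 \<le> ?q" "?q < 1" using qf_bounds[OF s] by auto
  have C: "0 \<le> ?C" by simp
  have "(\<integral>\<^sup>+\<omega>. (if \<exists>b. Ev T eps (Suc n) b \<omega> then ennreal (exp (- s * cluster_length (poisson_points T \<omega>) eps (Suc n))) else 0) \<partial>M)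
     = (\<integral>\<^sup>+\<omega>. (\<Sum>a. \<Sum>m. ennreal (Fv T eps s n a m \<omega>)) \<partial>M)"
    by (simp only: pointwise_sum)
  also have "\<dots> = (\<Sum>a. \<integral>\<^sup>+\<omega>. (\<Sum>m. ennreal (Fv T eps s n a m \<omega>)) \<partial>M)"
    by (rule nn_integral_suminf) measurable
  also have "\<dots> = (\<Sum>a. \<Sum>m. \<integral>\<^sup>+\<omega>. ennreal (Fv T eps s n a m \<omega>) \<partial>M)"
    by (rule suminf_cong, rule nn_integral_suminf) measurable
  also have "\<dots> = (\<Sum>a. emeasure M {\<omega>\<in>space M. Ev T eps n a \<omega>} * ennreal (R s))"
  proof (rule suminf_cong)
    fix a
    have "(\<Sum>m. \<integral>\<^sup>+\<omega>. ennreal (Fv T eps s n a m \<omega>) \<partial>M) =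
        (\<Sum>m. emeasure M {\<omega>\<in>space M. Ev T eps n a \<omega>} * ennreal (?q ^ m * ?C))"
      by (simp only: int_Fv[OF s] ennreal_power[OF q(1)] ennreal_mult[symmetric] zero_le_power[OF q(1)] C)
    also have "\<dots> = emeasure M {\<omega>\<in>space M. Ev T eps n a \<omega>} * (\<Sum>m. ennreal (?q ^ m * ?C))"
      by (rule ennreal_suminf_cmult)
    also have "(\<Sum>m. ennreal (?q ^ m * ?C)) = ennreal (\<Sum>m. ?q ^ m * ?C)"
    proof (rule suminf_ennreal2)
      show "\<And>m. 0 \<le> ?q ^ m * ?C" using q C by simp
      show "summable (\<lambda>m. ?q ^ m * ?C)" using q by (intro summable_mult2 summable_geometric) simp
    qed
    also have "(\<Sum>m. ?q ^ m * ?C) = R s"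
    proof -
      have "(\<Sum>m. ?q ^ m * ?C) = (\<Sum>m. ?q ^ m) * ?C"
        using q by (intro suminf_mult2[symmetric] summable_geometric) simp
      also have "(\<Sum>m. ?q ^ m) = 1 / (1 - ?q)" using q by (intro suminf_geometric) simp
      finally show ?thesis by (simp add: R_def)
    qed
    finally show "(\<Sum>m. \<integral>\<^sup>+\<omega>. ennreal (Fv T eps s n a m \<omega>) \<partial>M) = emeasure M {\<omega>\<in>space M. Ev T eps n a \<omega>} * ennreal (R s)" .
  qed
  also have "\<dots> = emeasure M (U n) * ennreal (R s)"
    by (simp only: ennreal_suminf_multc sum_Ev)
  finally show ?thesis .
qed

lemma R0: "R 0 = 1"
proof -
  have "qf l eps 0 = 1 - exp (- (l * eps))" using l_pos by (simp add: qf_def)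
  then show ?thesis using l_pos eps_pos by (simp add: R_def mult.commute)
qed

lemma U_one: "emeasure M (U n) = 1"
proof (induction n)
  case 0
  have "U 0 = space M" unfolding U_def using Ev0[of T eps] by blast
  then show ?case by (simp add: emeasure_space_1)
next
  case (Suc n)
  have "(\<integral>\<^sup>+\<omega>. (if \<exists>b. Ev T eps (Suc n) b \<omega> then ennreal (exp (- 0 * cluster_length (poisson_points T \<omega>) eps (Suc n))) else 0) \<partial>M)
     = emeasure M (U n) * ennreal (R 0)" by (rule main_nn) simp
  moreover have "(\<integral>\<^sup>+\<omega>. (if \<exists>b. Ev T eps (Suc n) b \<omega> then ennreal (exp (- 0 * cluster_length (poisson_points T \<omega>) eps (Suc n))) else 0) \<partial>M)
     = (\<integral>\<^sup>+\<omega>. indicator (U (Suc n)) \<omega> \<partial>M)"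
    by (rule nn_integral_cong) (simp add: U_def indicator_def)
  ultimately show ?case using Suc by (simp add: R0)
qed

lemma R_eq:
  assumes s: "0 \<le> s"
  shows "R s = (l + s) / (l + s * exp ((l + s) * eps))"
proof -
  define E where "E = exp ((l + s) * eps)"
  have E: "0 < E" by (simp add: E_def)
  have e1: "exp (- ((l + s) * eps)) = 1 / E" unfolding E_def exp_minus by (simp add: inverse_eq_divide)
  have e2: "exp (- s * eps) * exp (- eps * l) = 1 / E"
  proof -
    have "exp (- s * eps) * exp (- eps * l) = exp (- ((l + s) * eps))"
      by (simp add: exp_add[symmetric] algebra_simps)
    then show ?thesis using e1 by simp
  qed
  have ls: "0 < l + s" using l_pos s by simp
  have d: "0 < l + s * E" using l_pos s E by (simp add: add_pos_nonneg)
  have "1 - qf l eps s = (l + s * E) / ((l + s) * E)"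
  proof -
    have ne: "E * l + E * s \<noteq> 0" "(l + s) * E \<noteq> 0" using ls E by (auto simp: distrib_left[symmetric])
    show ?thesis unfolding qf_def e1 using ls E ne by (simp add: field_simps)
  qed
  then have "R s = (1 / E) / ((l + s * E) / ((l + s) * E))"
    unfolding R_def e2 by simp
  also have "\<dots> = (l + s) / (l + s * E)"
  proof -
    have ne: "E * l + E * (E * s) \<noteq> 0" "l + E * s \<noteq> 0" "l + s * E \<noteq> 0"
      using d E by (auto simp: distrib_left[symmetric] mult.commute)
    show ?thesis using ls E ne by (simp add: field_simps)
  qed
  finally show ?thesis by (simp add: E_def)
qed

lemma final:
  assumes i: "1 \<le> i" and s: "0 \<le> s"
  shows "expectation (\<lambda>\<omega>. exp (- s * cluster_length (poisson_points T \<omega>) eps i))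
         = (l + s) / (l + s * exp ((l + s) * eps))"
proof -
  obtain n where n: "i = Suc n" using i by (cases i) auto
  define CL where "CL \<omega> = cluster_length (poisson_points T \<omega>) eps (Suc n)" for \<omega>
  have st: "cluster_starts (poisson_points T \<omega>) eps = {k. k = 0 \<or> eps < T k \<omega>}" for \<omega>
    by (simp add: starts_eq stS_def)
  have g: "(\<lambda>\<omega>. enumerate {k. k = 0 \<or> eps < T k \<omega>} j) \<in> measurable M (count_space UNIV)" for j
    by (rule measurable_enumerate) measurable
  have pp: "(\<lambda>\<omega>. poisson_points T \<omega> j) \<in> borel_measurable M" for j
    unfolding poisson_points_def by measurable
  have CLe: "CL \<omega> = poisson_points T \<omega> (enumerate {k. k = 0 \<or> eps < T k \<omega>} (Suc n) - 1) + eps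
      - poisson_points T \<omega> (enumerate {k. k = 0 \<or> eps < T k \<omega>} n)" for \<omega>
    by (simp add: CL_def cluster_length_def cluster_E_def cluster_A_def st)
  have m1: "(\<lambda>\<omega>. poisson_points T \<omega> (enumerate {k. k = 0 \<or> eps < T k \<omega>} (Suc n) - 1)) \<in> borel_measurable M"
    by (rule measurable_compose_countable[where f="\<lambda>j \<omega>. poisson_points T \<omega> (j - 1)", OF pp g])
  have m2: "(\<lambda>\<omega>. poisson_points T \<omega> (enumerate {k. k = 0 \<or> eps < T k \<omega>} n)) \<in> borel_measurable M"
    by (rule measurable_compose_countable[where f="\<lambda>j \<omega>. poisson_points T \<omega> j", OF pp g])
  have CLm[measurable]: "CL \<in> borel_measurable M"
    unfolding CLe[abs_def] using m1 m2 by measurable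
  have "expectation (\<lambda>\<omega>. exp (- s * CL \<omega>)) = enn2real (\<integral>\<^sup>+\<omega>. ennreal (exp (- s * CL \<omega>)) \<partial>M)"
    by (rule integral_eq_nn_integral) auto
  also have "(\<integral>\<^sup>+\<omega>. ennreal (exp (- s * CL \<omega>)) \<partial>M) =
      (\<integral>\<^sup>+\<omega>. (if \<exists>b. Ev T eps (Suc n) b \<omega> then ennreal (exp (- s * cluster_length (poisson_points T \<omega>) eps (Suc n))) else 0) \<partial>M)"
  proof (rule nn_integral_cong_AE)
    have "prob (U (Suc n)) = 1" using U_one[of "Suc n"] by (simp add: emeasure_eq_measure)
    then have "AE \<omega> in M. \<omega> \<in> U (Suc n)" by (rule AE_prob_1)
    then show "AE \<omega> in M. ennreal (exp (- s * CL \<omega>)) = (if \<exists>b. Ev T eps (Suc n) b \<omega> then ennreal (exp (- s * cluster_length (poisson_points T \<omega>) eps (Suc n))) else 0)"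
      by eventually_elim (auto simp: U_def CL_def)
  qed
  also have "\<dots> = ennreal (R s)" using main_nn[OF s, of n] U_one[of n] by simp
  finally have "expectation (\<lambda>\<omega>. exp (- s * CL \<omega>)) = R s"
  proof -
    assume "expectation (\<lambda>\<omega>. exp (- s * CL \<omega>)) = enn2real (ennreal (R s))"
    moreover have "0 \<le> R s" using qf_bounds[OF s] by (simp add: R_def)
    ultimately show ?thesis by simp
  qed
  then show ?thesis using R_eq[OF s] by (simp add: n CL_def)
qed

end


theorem theorem1:
  fixes M :: "'a measure" and T :: "nat \<Rightarrow> 'a \<Rightarrow> real"
    and l eps s :: real and i :: nat
  assumes "prob_space M"
    and "l > 0" and "eps > 0" and "i \<ge> 1" and "s \<ge> 0"
    and "prob_space.indep_vars M (\<lambda>_. borel) T UNIV"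
    and "\<And>n. distributed M lborel (T n) (exponential_density l)"
  shows "prob_space.expectation M
           (\<lambda>\<omega>. exp (- s * cluster_length (poisson_points T \<omega>) eps i))
         = (l + s) / (l + s * exp ((l + s) * eps))"
proof -
  interpret clus M T l eps
    by (rule clus.intro[OF assms(1)], rule clus_axioms.intro) (use assms in auto)
  show ?thesis using final[OF assms(4,5)] .
qed

end
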